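(* Let $G$ be an infinite finitely generated residually finite group, $S$ a finite symmetric generating set, and $(X_n)_{n\ge0}$ the lazy random walk on $\mathrm{Cay}(G,S)$. Suppose there is a sequence of positive numbers $(p_k)_{k\ge2}$ with $\sum_{k\ge2}p_k<\infty$ and $\mathbb{P}(X_n\in\Lambda_k\setminus\{e\})\le p_k$ for all $n\ge1$ and $k\ge2$. Then $$\lim_{n\to\infty}\mathbb{E}[D_G(X_n)]=2+\sum_{k\ge2}\frac{1}{[G:\Lambda_k]}<\infty.$$
   Context: For $g\ne e$, $D_G(g)=\min\{[G:N]: N\lhd G\text{ of finite index},\ g\notin N\}$, and $D_G(e)=0$. For $k\ge2$, $\Lambda_k$ is the intersection of all normal subgroups of $G$ of index at most $k$. The lazy random walk on $\mathrm{Cay}(G,S)$ is the Markov chain with $X_0=e$ and transition matrix $\frac12 I+\frac12P$, where $P(x,y)=\frac1{|S|}\#\{s\in S:y=xs\}$. *)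

theory Defs
  imports "HOL-Algebra.Algebra" "HOL-Probability.Probability"
begin

definition fin_index_normal :: "('a, 'b) monoid_scheme \<Rightarrow> 'a set \<Rightarrow> bool" where
  "fin_index_normal G N \<longleftrightarrow> N \<lhd> G \<and> finite (rcosets\<^bsub>G\<^esub> N)"

definition residually_finite :: "('a, 'b) monoid_scheme \<Rightarrow> bool" where
  "residually_finite G \<longleftrightarrow>
     (\<forall>g\<in>carrier G. g \<noteq> \<one>\<^bsub>G\<^esub> \<longrightarrow> (\<exists>N. fin_index_normal G N \<and> g \<notin> N))"

definition depth :: "('a, 'b) monoid_scheme \<Rightarrow> 'a \<Rightarrow> nat" where
  "depth G g = (if g = \<one>\<^bsub>G\<^esub> then 0
     else Inf {card (rcosets\<^bsub>G\<^esub> N) | N. fin_index_normal G N \<and> g \<notin> N})"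

definition Lambda :: "('a, 'b) monoid_scheme \<Rightarrow> nat \<Rightarrow> 'a set" where
  "Lambda G k = \<Inter> {N. fin_index_normal G N \<and> card (rcosets\<^bsub>G\<^esub> N) \<le> k}"

text \<open>Distribution of X_n for the lazy random walk on Cay(G,S), started at e:
  with probability 1/2 stay, with probability 1/2 move to x s with s uniform in S.\<close>
primrec lazy_walk :: "('a, 'b) monoid_scheme \<Rightarrow> 'a set \<Rightarrow> nat \<Rightarrow> 'a pmf" where
  "lazy_walk G S 0 = return_pmf \<one>\<^bsub>G\<^esub>"
| "lazy_walk G S (Suc n) = bind_pmf (lazy_walk G S n) (\<lambda>x.
      bind_pmf (bernoulli_pmf (1/2)) (\<lambda>b. if b then return_pmf x
          else map_pmf (\<lambda>s. x \<otimes>\<^bsub>G\<^esub> s) (pmf_of_set S)))"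

end

theory Submission
  imports Defs
begin

lemma measure_bind_pmf':
  "measure (measure_pmf (bind_pmf q f)) Y = (\<integral>x. measure (measure_pmf (f x)) Y \<partial>measure_pmf q)"
  unfolding measure_pmf_bind
  by (rule measure_pmf.measure_bind[where N="count_space UNIV"])
     (auto simp: measurable_measure_pmf space_subprob_algebra subprob_space_measure_pmf)

lemma prob_as_sum:
  assumes "finite A" "set_pmf p \<subseteq> A"
  shows "measure_pmf.prob p D = (\<Sum>a\<in>A. indicator D a * pmf p a)"
proof -
  have "measure_pmf.prob p D = (\<integral>x. indicator D x \<partial>measure_pmf p)" by simp
  also have "\<dots> = (\<Sum>a\<in>A. indicator D a * pmf p a)"
    using assms by (intro integral_measure_pmf_real) auto
  finally show ?thesis .
qed

lemma exp_as_sum: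
  assumes "finite A" "set_pmf p \<subseteq> A"
  shows "measure_pmf.expectation p (f::_\<Rightarrow>real) = (\<Sum>a\<in>A. f a * pmf p a)"
  using assms by (intro integral_measure_pmf_real) auto

locale walk_setup = group G for G (structure) +
  fixes S :: "'a set"
  assumes S_fin: "finite S" and S_sub: "S \<subseteq> carrier G" and S_ne: "S \<noteq> {}"
    and S_inv: "\<And>s. s \<in> S \<Longrightarrow> inv s \<in> S"
    and S_gen: "generate G S = carrier G"
begin

lemma support: "set_pmf (lazy_walk G S n) \<subseteq> carrier G \<and> finite (set_pmf (lazy_walk G S n))"
proof (induction n)
  case 0
  then show ?case by simp
next
  case (Suc n)
  have fin: "finite (set_pmf (if b then return_pmf x else map_pmf (\<lambda>s. x \<otimes> s) (pmf_of_set S)))" for b x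
    using S_fin S_ne by auto
  have sub: "set_pmf (if b then return_pmf x else map_pmf (\<lambda>s. x \<otimes> s) (pmf_of_set S)) \<subseteq> carrier G"
    if "x \<in> carrier G" for b x
    using S_fin S_ne S_sub that by auto
  show ?case using Suc fin sub by (auto simp: set_bind_pmf) blast
qed

lemma inner_prob:
  assumes "x \<in> carrier G" "C \<subseteq> carrier G"
  shows "measure_pmf.prob (bind_pmf (bernoulli_pmf (1/2)) (\<lambda>b. if b then return_pmf x
          else map_pmf (\<lambda>s. x \<otimes> s) (pmf_of_set S))) C
     = indicator C x / 2 + (\<Sum>s\<in>S. indicator (C #> inv s) x) / (2 * card S)"
proof -
  have card: "real (card (S \<inter> (\<lambda>s. x \<otimes> s) -` C)) = (\<Sum>s\<in>S. indicator (C #> inv s) x)"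
  proof -
    have eq: "(x \<otimes> s \<in> C) = (x \<in> C #> inv s)" if "s \<in> S" for s
    proof
      assume "x \<otimes> s \<in> C"
      moreover have "x = (x \<otimes> s) \<otimes> inv s" using that S_sub assms
        by (simp add: m_assoc subsetD)
      ultimately show "x \<in> C #> inv s" unfolding r_coset_def by blast
    next
      assume "x \<in> C #> inv s"
      then obtain c where c: "c \<in> C" "x = c \<otimes> inv s" unfolding r_coset_def by blast
      then have "x \<otimes> s = c" using that S_sub assms by (simp add: m_assoc subsetD)
      then show "x \<otimes> s \<in> C" using c by simp
    qed
    have "(\<Sum>s\<in>S. indicator (C #> inv s) x) = (\<Sum>s\<in>S. (if x \<otimes> s \<in> C then 1 else 0::real))"
      by (intro sum.cong) (auto simp: eq indicator_def)
    also have "\<dots> = real (card (S \<inter> (\<lambda>s. x \<otimes> s) -` C))"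
      using S_fin by (simp add: sum.If_cases Int_def)
    finally show ?thesis by simp
  qed
  show ?thesis
    using S_fin S_ne
    by (simp add: measure_bind_pmf' measure_pmf_of_set card field_simps)
qed

lemma recur:
  assumes "C \<subseteq> carrier G"
  shows "measure_pmf.prob (lazy_walk G S (Suc n)) C =
     measure_pmf.prob (lazy_walk G S n) C / 2
     + (\<Sum>s\<in>S. measure_pmf.prob (lazy_walk G S n) (C #> inv s)) / (2 * card S)"
proof -
  let ?p = "lazy_walk G S n"
  let ?A = "set_pmf ?p"
  have A: "finite ?A" "?A \<subseteq> carrier G" using support by auto
  have "measure_pmf.prob (lazy_walk G S (Suc n)) C =
     (\<integral>x. (indicator C x / 2 + (\<Sum>s\<in>S. indicator (C #> inv s) x) / (2 * card S)) \<partial>measure_pmf ?p)"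
  proof -
    have ae: "AE x in measure_pmf ?p. measure_pmf.prob (bind_pmf (bernoulli_pmf (1/2)) (\<lambda>b. if b then return_pmf x
          else map_pmf (\<lambda>s. x \<otimes> s) (pmf_of_set S))) C = 
        (indicator C x / 2 + (\<Sum>s\<in>S. indicator (C #> inv s) x) / (2 * card S))"
      unfolding AE_measure_pmf_iff using inner_prob A(2) assms by blast
    show ?thesis
      unfolding lazy_walk.simps
      by (subst measure_bind_pmf') (rule integral_cong_AE[OF _ _ ae], auto)
  qed
  also have "\<dots> = (\<Sum>a\<in>?A. (indicator C a / 2 + (\<Sum>s\<in>S. indicator (C #> inv s) a) / (2 * card S)) * pmf ?p a)"
    by (intro integral_measure_pmf_real) (use A in auto)
  also have "\<dots> = (\<Sum>a\<in>?A. indicator C a * pmf ?p a / 2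
       + (\<Sum>s\<in>S. indicator (C #> inv s) a * pmf ?p a) / (2 * card S))"
    by (intro sum.cong refl) (simp add: sum_distrib_left sum_distrib_right field_simps)
  also have "\<dots> = (\<Sum>a\<in>?A. indicator C a * pmf ?p a) / 2
       + (\<Sum>a\<in>?A. \<Sum>s\<in>S. indicator (C #> inv s) a * pmf ?p a) / (2 * card S)"
    by (simp add: sum.distrib sum_divide_distrib)
  also have "(\<Sum>a\<in>?A. \<Sum>s\<in>S. indicator (C #> inv s) a * pmf ?p a)
     = (\<Sum>s\<in>S. \<Sum>a\<in>?A. indicator (C #> inv s) a * pmf ?p a)"
    by (rule sum.swap)
  finally show ?thesis using prob_as_sum[OF A(1) order_refl] by simp
qed

abbreviation nu where "nu n C \<equiv> measure_pmf.prob (lazy_walk G S n) C"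

lemma prob_carrier: "nu n (carrier G) = 1"
proof -
  have A: "finite (set_pmf (lazy_walk G S n))" "set_pmf (lazy_walk G S n) \<subseteq> carrier G" using support by auto
  have "nu n (carrier G) = (\<Sum>a\<in>set_pmf (lazy_walk G S n). indicator (carrier G) a * pmf (lazy_walk G S n) a)"
    by (rule prob_as_sum[OF A(1) order_refl])
  also have "\<dots> = (\<Sum>a\<in>set_pmf (lazy_walk G S n). pmf (lazy_walk G S n) a)"
    using A(2) by (intro sum.cong) auto
  also have "\<dots> = 1" using A(1) by (rule sum_pmf_eq_1) simp
  finally show ?thesis .
qed

context
  fixes H assumes H: "subgroup H G" "finite (rcosets H)"
begin

lemma coset_sub: "C \<in> rcosets H \<Longrightarrow> C \<subseteq> carrier G"
  using subgroup.rcosets_carrier[OF H(1) is_group] by blast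

lemma H_sub: "H \<subseteq> carrier G" using H(1) subgroup.subset by blast

lemma coset_shift: assumes "C \<in> rcosets H" "t \<in> carrier G" shows "C #> t \<in> rcosets H"
proof -
  obtain g where g: "g \<in> carrier G" "C = H #> g" using assms(1) unfolding RCOSETS_def by blast
  have "C #> t = H #> (g \<otimes> t)" using g assms(2) H_sub by (simp add: coset_mult_assoc)
  then show ?thesis using g assms(2) H_sub by (simp add: rcosetsI)
qed

lemma coset_shift_inv: assumes "C \<in> rcosets H" "t \<in> carrier G" shows "(C #> t) #> inv t = C"
  using assms coset_sub[OF assms(1)] by (simp add: coset_mult_assoc)

lemma sum_shift:
  assumes "t \<in> carrier G"
  shows "(\<Sum>C\<in>rcosets H. f (C #> t)) = (\<Sum>C\<in>rcosets H. (f C :: real))"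
proof -
  have "bij_betw (\<lambda>C. C #> t) (rcosets H) (rcosets H)"
  proof (rule bij_betw_byWitness[where f'="\<lambda>C. C #> inv t"])
    show "\<forall>C\<in>rcosets H. C #> t #> inv t = C" using assms coset_shift_inv by blast
    show "\<forall>C\<in>rcosets H. C #> inv t #> t = C" using assms coset_sub by (simp add: coset_mult_assoc)
  qed (use assms coset_shift in auto)
  then show ?thesis by (rule sum.reindex_bij_betw)
qed

lemma total: "(\<Sum>C\<in>rcosets H. nu n C) = 1"
proof -
  have "(\<Sum>C\<in>rcosets H. nu n C) = nu n (\<Union>C\<in>rcosets H. C)"
  proof (rule measure_pmf.finite_measure_finite_Union[symmetric])
    show "disjoint_family_on (\<lambda>C. C) (rcosets H)"
      using rcos_disjoint[OF H(1)] unfolding disjoint_family_on_def pairwise_def disjnt_def by blast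
  qed (use H(2) in auto)
  also have "(\<Union>C\<in>rcosets H. C) = carrier G" using rcosets_part_G[OF H(1)] by simp
  finally show ?thesis using prob_carrier by simp
qed

definition E where "E n = (\<Sum>C\<in>rcosets H. (nu n C)\<^sup>2)"
definition Dsum where "Dsum n = (\<Sum>C\<in>rcosets H. \<Sum>s\<in>S. (nu n C - nu n (C #> inv s))\<^sup>2)"

lemma energy: "E (Suc n) \<le> E n - Dsum n / (4 * card S)"
proof -
  define k where "k = real (card S)"
  have k: "k > 0" unfolding k_def using S_fin S_ne by (simp add: card_gt_0_iff)
  have pt: "(nu (Suc n) C)\<^sup>2 \<le> (\<Sum>s\<in>S. ((nu n C)\<^sup>2 + (nu n (C #> inv s))\<^sup>2) / 2
        - (nu n C - nu n (C #> inv s))\<^sup>2 / 4) / k" if C: "C \<in> rcosets H" for C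
  proof -
    have "nu (Suc n) C = (\<Sum>s\<in>S. (nu n C + nu n (C #> inv s)) / 2) / k"
      using recur[OF coset_sub[OF C], of n] k unfolding k_def
      by (simp add: sum.distrib sum_divide_distrib[symmetric] field_simps)
    then have "(nu (Suc n) C)\<^sup>2 = (\<Sum>s\<in>S. (nu n C + nu n (C #> inv s)) / 2)\<^sup>2 / k\<^sup>2"
      by (simp add: power_divide)
    also have "\<dots> \<le> ((\<Sum>s\<in>S. ((nu n C + nu n (C #> inv s)) / 2)\<^sup>2) * k) / k\<^sup>2"
      unfolding k_def by (intro divide_right_mono sum_squared_le_sum_of_squares) simp
    also have "\<dots> = (\<Sum>s\<in>S. ((nu n C + nu n (C #> inv s)) / 2)\<^sup>2) / k"
      using k by (simp add: power2_eq_square)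
    also have "(\<Sum>s\<in>S. ((nu n C + nu n (C #> inv s)) / 2)\<^sup>2) = (\<Sum>s\<in>S. ((nu n C)\<^sup>2 + (nu n (C #> inv s))\<^sup>2) / 2
        - (nu n C - nu n (C #> inv s))\<^sup>2 / 4)"
      by (intro sum.cong refl) (simp add: power2_eq_square field_simps)
    finally show ?thesis .
  qed
  have "E (Suc n) \<le> (\<Sum>C\<in>rcosets H. (\<Sum>s\<in>S. ((nu n C)\<^sup>2 + (nu n (C #> inv s))\<^sup>2) / 2
        - (nu n C - nu n (C #> inv s))\<^sup>2 / 4) / k)"
    unfolding E_def by (intro sum_mono pt)
  also have "\<dots> = ((\<Sum>s\<in>S. \<Sum>C\<in>rcosets H. ((nu n C)\<^sup>2 + (nu n (C #> inv s))\<^sup>2) / 2)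
        - Dsum n / 4) / k"
    unfolding Dsum_def
    by (simp add: sum_divide_distrib[symmetric] sum_subtractf sum.swap[of _ S] )
  also have "(\<Sum>s\<in>S. \<Sum>C\<in>rcosets H. ((nu n C)\<^sup>2 + (nu n (C #> inv s))\<^sup>2) / 2) = (\<Sum>s\<in>S. E n)"
  proof (intro sum.cong refl)
    fix s assume s: "s \<in> S"
    have "(\<Sum>C\<in>rcosets H. (nu n (C #> inv s))\<^sup>2) = E n"
      unfolding E_def using s S_sub by (intro sum_shift) auto
    then show "(\<Sum>C\<in>rcosets H. ((nu n C)\<^sup>2 + (nu n (C #> inv s))\<^sup>2) / 2) = E n"
      by (simp add: sum.distrib sum_divide_distrib[symmetric] E_def)
  qed
  also have "(\<Sum>s\<in>S. E n) = k * E n" unfolding k_def by simp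
  finally show ?thesis using k unfolding k_def by (simp add: field_simps)
qed


lemma E_nonneg: "E n \<ge> 0" unfolding E_def by (intro sum_nonneg) simp
lemma Dsum_nonneg: "Dsum n \<ge> 0" unfolding Dsum_def by (intro sum_nonneg) simp

lemma Dsum_lim: "Dsum \<longlonglongrightarrow> 0"
proof -
  define k where "k = real (card S)"
  have k: "k > 0" unfolding k_def using S_fin S_ne by (simp add: card_gt_0_iff)
  have tel: "(\<Sum>i<N. Dsum i / (4 * k)) \<le> E 0 - E N" for N
  proof (induction N)
    case 0 then show ?case by simp
  next
    case (Suc N)
    have e: "E (Suc N) \<le> E N - Dsum N / (4 * k)" using energy[of N] unfolding k_def by simp
    have "(\<Sum>i<Suc N. Dsum i / (4 * k)) = (\<Sum>i<N. Dsum i / (4 * k)) + Dsum N / (4 * k)" by simp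
    then show ?case using Suc.IH e by linarith
  qed
  have "summable (\<lambda>i. Dsum i / (4 * k))"
  proof (rule summableI_nonneg_bounded)
    show "0 \<le> Dsum i / (4 * k)" for i using Dsum_nonneg k by simp
    show "(\<Sum>i<N. Dsum i / (4 * k)) \<le> E 0" for N using tel[of N] E_nonneg[of N] by linarith
  qed
  then have "(\<lambda>i. Dsum i / (4 * k)) \<longlonglongrightarrow> 0" by (rule summable_LIMSEQ_zero)
  then have "(\<lambda>i. (Dsum i / (4 * k)) * (4 * k)) \<longlonglongrightarrow> 0 * (4 * k)" by (rule tendsto_mult_right)
  then show ?thesis using k by simp
qed

lemma sq_lim: fixes f :: "nat \<Rightarrow> real" assumes "(\<lambda>n. (f n)\<^sup>2) \<longlonglongrightarrow> 0" shows "f \<longlonglongrightarrow> 0"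
proof -
  have "(\<lambda>n. sqrt ((f n)\<^sup>2)) \<longlonglongrightarrow> sqrt 0" by (intro tendsto_real_sqrt assms)
  then have "(\<lambda>n. \<bar>f n\<bar>) \<longlonglongrightarrow> 0" by simp
  then show ?thesis by (rule tendsto_rabs_zero_cancel)
qed

lemma edge:
  assumes C: "C \<in> rcosets H" and s: "s \<in> S"
  shows "(\<lambda>n. nu n C - nu n (C #> inv s)) \<longlonglongrightarrow> 0"
proof (rule sq_lim)
  have le: "(nu n C - nu n (C #> inv s))\<^sup>2 \<le> Dsum n" for n
  proof -
    have "(nu n C - nu n (C #> inv s))\<^sup>2 \<le> (\<Sum>s\<in>S. (nu n C - nu n (C #> inv s))\<^sup>2)"
      by (rule member_le_sum[OF s _ S_fin]) simp
    also have "\<dots> \<le> Dsum n" unfolding Dsum_def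
      by (rule member_le_sum[OF C _ H(2), where f="\<lambda>C. \<Sum>s\<in>S. (nu n C - nu n (C #> inv s))\<^sup>2"]) (intro sum_nonneg, simp)
    finally show ?thesis .
  qed
  show "(\<lambda>n. (nu n C - nu n (C #> inv s))\<^sup>2) \<longlonglongrightarrow> 0"
    by (rule tendsto_sandwich[OF _ _ tendsto_const Dsum_lim]) (use le in auto)
qed

lemma shift_lim:
  assumes C: "C \<in> rcosets H" and s: "s \<in> S"
  shows "(\<lambda>n. nu n (C #> s) - nu n C) \<longlonglongrightarrow> 0"
proof -
  have sc: "s \<in> carrier G" using s S_sub by auto
  have "C #> s #> inv s = C" using coset_shift_inv[OF C sc] .
  then show ?thesis using edge[OF coset_shift[OF C sc] s] by simp
qed

lemma gen_lim:
  assumes "g \<in> generate G S"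
  shows "\<forall>C\<in>rcosets H. (\<lambda>n. nu n (C #> g) - nu n C) \<longlonglongrightarrow> 0"
  using assms
proof (induction rule: generate.induct)
  case one
  then show ?case using coset_sub by simp
next
  case (incl h)
  then show ?case using shift_lim by blast
next
  case (inv h)
  then show ?case using shift_lim S_inv by blast
next
  case (eng h1 h2)
  have c: "h1 \<in> carrier G" "h2 \<in> carrier G" using eng.hyps generate_in_carrier S_sub by auto
  show ?case
  proof
    fix C assume C: "C \<in> rcosets H"
    have C1: "C #> h1 \<in> rcosets H" using coset_shift[OF C c(1)] .
    have eq: "C #> (h1 \<otimes> h2) = C #> h1 #> h2" using coset_sub[OF C] c by (simp add: coset_mult_assoc)
    have "(\<lambda>n. (nu n (C #> h1 #> h2) - nu n (C #> h1)) + (nu n (C #> h1) - nu n C)) \<longlonglongrightarrow> 0 + 0"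
      using eng.IH C C1 by (intro tendsto_add) auto
    then show "(\<lambda>n. nu n (C #> (h1 \<otimes> h2)) - nu n C) \<longlonglongrightarrow> 0" unfolding eq by simp
  qed
qed

lemma core: "(\<lambda>n. nu n H) \<longlonglongrightarrow> 1 / real (card (rcosets H))"
proof -
  define m where "m = real (card (rcosets H))"
  have HR: "H \<in> rcosets H" using rcosetsI[OF H_sub one_closed] H_sub by simp
  have m: "m > 0" unfolding m_def using H(2) HR by (auto simp: card_gt_0_iff)
  have each: "(\<lambda>n. nu n H - nu n C) \<longlonglongrightarrow> 0" if C: "C \<in> rcosets H" for C
  proof -
    obtain g where g: "g \<in> carrier G" "C = H #> g" using C unfolding RCOSETS_def by blast
    have "(\<lambda>n. nu n (H #> g) - nu n H) \<longlonglongrightarrow> 0" using gen_lim[of g] g S_gen HR by auto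
    then have "(\<lambda>n. - (nu n (H #> g) - nu n H)) \<longlonglongrightarrow> - 0" by (intro tendsto_minus)
    then show ?thesis using g by simp
  qed
  have "(\<lambda>n. \<Sum>C\<in>rcosets H. nu n H - nu n C) \<longlonglongrightarrow> (\<Sum>C\<in>rcosets H. 0)"
    by (intro tendsto_sum each)
  moreover have "(\<Sum>C\<in>rcosets H. nu n H - nu n C) = m * nu n H - 1" for n
    using total[of n] unfolding m_def by (simp add: sum_subtractf)
  ultimately have "(\<lambda>n. m * nu n H - 1) \<longlonglongrightarrow> 0" by simp
  then have "(\<lambda>n. ((m * nu n H - 1) + 1) / m) \<longlonglongrightarrow> (0 + 1) / m"
    by (intro tendsto_divide tendsto_add tendsto_const) (use m in auto)
  then show ?thesis using m unfolding m_def by simp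
qed

end

lemma fin_int:
  assumes "fin_index_normal G A" "fin_index_normal G B"
  shows "fin_index_normal G (A \<inter> B)"
proof -
  have nA: "A \<lhd> G" and nB: "B \<lhd> G" and fA: "finite (rcosets A)" and fB: "finite (rcosets B)"
    using assms unfolding fin_index_normal_def by auto
  have sA: "subgroup A G" and sB: "subgroup B G" using nA nB normal_imp_subgroup by auto
  have nAB: "A \<inter> B \<lhd> G" using normal_subgroup_intersect[OF nA nB] .
  have sAB: "subgroup (A \<inter> B) G" using nAB normal_imp_subgroup by auto
  have eq: "(A \<inter> B) #> x = (A #> x) \<inter> (B #> x)" if x: "x \<in> carrier G" for x
  proof (intro equalityI subsetI)
    fix y assume "y \<in> (A \<inter> B) #> x" then show "y \<in> (A #> x) \<inter> (B #> x)"
      unfolding r_coset_def by auto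
  next
    fix y assume y: "y \<in> (A #> x) \<inter> (B #> x)"
    have yc: "y \<in> carrier G" using y x subgroup.subset[OF sA] r_coset_subset_G by blast
    have "y \<otimes> inv x \<in> A" "y \<otimes> inv x \<in> B"
      using y subgroup.rcos_module[OF sA is_group x yc] subgroup.rcos_module[OF sB is_group x yc] by auto
    then show "y \<in> (A \<inter> B) #> x" using subgroup.rcos_module[OF sAB is_group x yc] by auto
  qed
  have "rcosets (A \<inter> B) \<subseteq> (\<lambda>(P, Q). P \<inter> Q) ` ((rcosets A) \<times> (rcosets B))"
  proof
    fix C assume "C \<in> rcosets (A \<inter> B)"
    then obtain x where x: "x \<in> carrier G" "C = (A \<inter> B) #> x" unfolding RCOSETS_def by blast
    then have "C = (\<lambda>(P, Q). P \<inter> Q) (A #> x, B #> x)" using eq by simp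
    moreover have "(A #> x, B #> x) \<in> (rcosets A) \<times> (rcosets B)"
      using x subgroup.subset[OF sA] subgroup.subset[OF sB] by (auto intro: rcosetsI)
    ultimately show "C \<in> (\<lambda>(P, Q). P \<inter> Q) ` ((rcosets A) \<times> (rcosets B))" by blast
  qed
  then have "finite (rcosets (A \<inter> B))" using fA fB by (rule finite_subset[OF _ finite_imageI[OF finite_cartesian_product]])
  then show ?thesis using nAB unfolding fin_index_normal_def by simp
qed

lemma rcosets_carrier_eq: "rcosets (carrier G) = {carrier G}"
proof -
  have "carrier G #> x = carrier G" if "x \<in> carrier G" for x
    using subgroup.rcos_const[OF subgroup_self is_group that] .
  then show ?thesis unfolding RCOSETS_def by auto
qed

lemma carrier_fin: "fin_index_normal G (carrier G)"
  unfolding fin_index_normal_def using normal_self rcosets_carrier_eq by simp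

lemma fin_Inter:
  assumes "finite NN" "\<And>N. N \<in> NN \<Longrightarrow> fin_index_normal G N"
  shows "fin_index_normal G (carrier G \<inter> \<Inter>NN)"
  using assms
proof (induction NN rule: finite_induct)
  case empty
  then show ?case using carrier_fin by simp
next
  case (insert N NN)
  have "carrier G \<inter> \<Inter>(insert N NN) = N \<inter> (carrier G \<inter> \<Inter>NN)" by auto
  then show ?case using insert fin_int by simp
qed

lemma Inter_normal:
  assumes "F \<noteq> {}" "\<And>N. N \<in> F \<Longrightarrow> N \<lhd> G"
  shows "\<Inter>F \<lhd> G"
proof -
  have sub: "subgroup (\<Inter>F) G"
    by (rule subgroups_Inter) (use assms normal_imp_subgroup in auto)
  show ?thesis unfolding normal_inv_iff
  proof (intro conjI ballI sub)
    fix x h assume "x \<in> carrier G" "h \<in> \<Inter>F"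
    then show "x \<otimes> h \<otimes> inv x \<in> \<Inter>F" using normal.inv_op_closed2[OF assms(2)] by blast
  qed
qed

lemma fin_index_card_pos: "fin_index_normal G N \<Longrightarrow> card (rcosets N) \<ge> 1"
proof -
  assume a: "fin_index_normal G N"
  then have s: "subgroup N G" "finite (rcosets N)" unfolding fin_index_normal_def using normal_imp_subgroup by auto
  have "N \<in> rcosets N" using rcosetsI[OF subgroup.subset[OF s(1)] one_closed] subgroup.subset[OF s(1)] by simp
  then have "card (rcosets N) > 0" using s(2) card_gt_0_iff by blast
  then show ?thesis by simp
qed

lemma index_one:
  assumes "fin_index_normal G N" "card (rcosets N) \<le> 1"
  shows "carrier G \<subseteq> N"
proof
  fix g assume g: "g \<in> carrier G"
  have s: "subgroup N G" "finite (rcosets N)" using assms unfolding fin_index_normal_def using normal_imp_subgroup by auto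
  have NR: "N \<in> rcosets N" using rcosetsI[OF subgroup.subset[OF s(1)] one_closed] subgroup.subset[OF s(1)] by simp
  have gR: "N #> g \<in> rcosets N" using rcosetsI[OF subgroup.subset[OF s(1)] g] .
  have "N #> g = N" using card_le_Suc0_iff_eq[OF s(2)] assms(2) NR gR by auto
  then show "g \<in> N" using rcos_self[OF g s(1)] by simp
qed

lemma big_index:
  assumes F: "\<And>N. N \<in> F \<Longrightarrow> fin_index_normal G N" "carrier G \<in> F"
    and inf: "infinite (rcosets (\<Inter>F))"
  shows "\<exists>H'. fin_index_normal G H' \<and> \<Inter>F \<subseteq> H' \<and> card (rcosets H') \<ge> M"
proof -
  have nF: "\<Inter>F \<lhd> G" by (rule Inter_normal) (use F in \<open>auto simp: fin_index_normal_def\<close>)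
  have sF: "subgroup (\<Inter>F) G" using nF normal_imp_subgroup by auto
  obtain T where T: "T \<subseteq> rcosets (\<Inter>F)" "finite T" "card T = M"
    using infinite_arbitrarily_large[OF inf] by blast
  define r where "r C = (SOME g. g \<in> carrier G \<and> C = \<Inter>F #> g)" for C
  have r: "r C \<in> carrier G \<and> C = \<Inter>F #> r C" if "C \<in> T" for C
  proof -
    have "\<exists>g. g \<in> carrier G \<and> C = \<Inter>F #> g" using that T(1) unfolding RCOSETS_def by blast
    then show ?thesis unfolding r_def by (rule someI_ex)
  qed
  have rmem: "r C \<in> carrier G" if "C \<in> T" for C using r[OF that] by (rule conjunct1)
  have req: "\<Inter>F #> r C = C" if "C \<in> T" for C using conjunct2[OF r[OF that]] by (rule sym)
  have ex: "\<exists>N. N \<in> F \<and> r C \<otimes> inv (r D) \<notin> N" if "C \<in> T" "D \<in> T" "C \<noteq> D" for C D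
  proof -
    have rc: "r C \<in> carrier G" "r D \<in> carrier G" using rmem that by auto
    have "r C \<otimes> inv (r D) \<notin> \<Inter>F"
    proof
      assume "r C \<otimes> inv (r D) \<in> \<Inter>F"
      then have "r C \<in> \<Inter>F #> r D" by (simp only: subgroup.rcos_module[OF sF is_group rc(2) rc(1)])
      then have "\<Inter>F #> r C = \<Inter>F #> r D" by (rule sym[OF repr_independence[OF _ rc(2) sF]])
      then show False using req[OF that(1)] req[OF that(2)] that(3) by simp
    qed
    then show ?thesis by auto
  qed
  define sep where "sep C D = (SOME N. N \<in> F \<and> r C \<otimes> inv (r D) \<notin> N)" for C D
  have sep: "sep C D \<in> F \<and> r C \<otimes> inv (r D) \<notin> sep C D" if "C \<in> T" "D \<in> T" "C \<noteq> D" for C D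
    unfolding sep_def by (rule someI_ex[OF ex[OF that]])
  define NN where "NN = (\<lambda>(C, D). sep C D) ` {(C, D). C \<in> T \<and> D \<in> T \<and> C \<noteq> D}"
  have NN_sep: "\<exists>N\<in>NN. r C \<otimes> inv (r D) \<notin> N" if "C \<in> T" "D \<in> T" "C \<noteq> D" for C D
  proof -
    have "sep C D \<in> NN" unfolding NN_def using that by (auto intro!: image_eqI[where x="(C, D)"])
    then show ?thesis using sep[OF that] by blast
  qed
  have NN_F: "NN \<subseteq> F" unfolding NN_def using sep by auto
  have finNN: "finite NN" unfolding NN_def by (rule finite_imageI, rule finite_subset[of _ "T \<times> T"]) (use T(2) in auto)
  define H' where "H' = carrier G \<inter> \<Inter>NN"
  have H'f: "fin_index_normal G H'" unfolding H'_def using fin_Inter[OF finNN] NN_F F(1) by blast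
  have sH': "subgroup H' G" "finite (rcosets H')" using H'f unfolding fin_index_normal_def using normal_imp_subgroup by auto
  have sub: "\<Inter>F \<subseteq> H'" unfolding H'_def using NN_F F(2) by blast
  have inj: "inj_on (\<lambda>C. H' #> r C) T"
  proof
    fix C D assume CD: "C \<in> T" "D \<in> T" "H' #> r C = H' #> r D"
    show "C = D"
    proof (rule ccontr)
      assume ne: "C \<noteq> D"
      have rc: "r C \<in> carrier G" "r D \<in> carrier G" using rmem CD by auto
      have "r C \<in> H' #> r D" using CD(3) rcos_self[OF rc(1) sH'(1)] by simp
      then have "r C \<otimes> inv (r D) \<in> H'" by (simp only: subgroup.rcos_module[OF sH'(1) is_group rc(2) rc(1)])
      then show False using NN_sep[OF CD(1,2) ne] unfolding H'_def by blast
    qed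
  qed
  have "(\<lambda>C. H' #> r C) ` T \<subseteq> rcosets H'"
    using rmem subgroup.subset[OF sH'(1)] by (auto intro: rcosetsI)
  then have "card ((\<lambda>C. H' #> r C) ` T) \<le> card (rcosets H')" using sH'(2) by (rule card_mono[rotated])
  then have "M \<le> card (rcosets H')" using card_image[OF inj] T(3) by simp
  then show ?thesis using H'f sub by blast
qed

lemma lemmaL:
  assumes F: "\<And>N. N \<in> F \<Longrightarrow> fin_index_normal G N" "carrier G \<in> F"
  shows "(\<lambda>n. nu n (\<Inter>F)) \<longlonglongrightarrow> 1 / real (card (rcosets (\<Inter>F)))"
proof -
  have nF: "\<Inter>F \<lhd> G" by (rule Inter_normal) (use F in \<open>auto simp: fin_index_normal_def\<close>)
  have sF: "subgroup (\<Inter>F) G" using nF normal_imp_subgroup by auto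
  show ?thesis
  proof (cases "finite (rcosets (\<Inter>F))")
    case True
    then show ?thesis using core[OF sF True] by simp
  next
    case False
    show ?thesis
    proof (rule order_tendstoI)
      fix a :: real assume "a < 1 / real (card (rcosets (\<Inter>F)))"
      then have "a < 0" using False by simp
      then show "\<forall>\<^sub>F n in sequentially. a < nu n (\<Inter>F)"
        by (intro always_eventually allI less_le_trans[OF _ measure_nonneg])
    next
      fix a :: real assume "1 / real (card (rcosets (\<Inter>F))) < a"
      then have a: "a > 0" using False by simp
      obtain M :: nat where M: "1 / a < M" using reals_Archimedean2 by blast
      have "1 / a > 0" using a by simp
      then have M0: "M > 0" using M by (cases "M = 0") auto
      obtain H' where H': "fin_index_normal G H'" "\<Inter>F \<subseteq> H'" "card (rcosets H') \<ge> M"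
        using big_index[OF F False] by blast
      have sH': "subgroup H' G" "finite (rcosets H')" using H'(1) unfolding fin_index_normal_def using normal_imp_subgroup by auto
      have "1 / real (card (rcosets H')) \<le> 1 / real M" using H'(3) M0 by (intro divide_left_mono) auto
      also have "\<dots> < a" using M a M0 by (simp add: field_simps)
      finally have lt: "1 / real (card (rcosets H')) < a" .
      have ev: "\<forall>\<^sub>F n in sequentially. nu n H' < a" using order_tendstoD(2)[OF core[OF sH'] lt] .
      have mono: "nu n (\<Inter>F) \<le> nu n H'" for n
        using H'(2) by (rule measure_pmf.finite_measure_mono) simp
      show "\<forall>\<^sub>F n in sequentially. nu n (\<Inter>F) < a" using ev
        by (rule eventually_mono) (rule le_less_trans[OF mono])
    qed
  qed
qed


lemma prob_cong:
  assumes "\<And>x. x \<in> carrier G \<Longrightarrow> (x \<in> D1) = (x \<in> D2)"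
  shows "nu n D1 = nu n D2"
proof -
  have A: "finite (set_pmf (lazy_walk G S n))" "set_pmf (lazy_walk G S n) \<subseteq> carrier G" using support by auto
  show ?thesis unfolding prob_as_sum[OF A(1) order_refl]
    using A(2) assms by (intro sum.cong refl) (auto simp: indicator_def)
qed

lemma depth_gt:
  assumes rf: "residually_finite G" and g: "g \<in> carrier G" and k: "k \<ge> 1"
  shows "(depth G g > k) = (g \<noteq> \<one> \<and> g \<in> Lambda G k)"
proof (cases "g = \<one>")
  case True
  then show ?thesis unfolding depth_def by simp
next
  case False
  define Sg where "Sg = {card (rcosets N) | N. fin_index_normal G N \<and> g \<notin> N}"
  have Sne: "Sg \<noteq> {}" using rf g False unfolding residually_finite_def Sg_def by blast
  have d: "depth G g = Inf Sg" unfolding depth_def Sg_def using False by simp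
  show ?thesis
  proof
    assume gt: "k < depth G g"
    have "g \<in> N" if N: "fin_index_normal G N" "card (rcosets N) \<le> k" for N
    proof (rule ccontr)
      assume "g \<notin> N"
      then have "card (rcosets N) \<in> Sg" unfolding Sg_def using N by blast
      then have "Inf Sg \<le> card (rcosets N)" by (rule wellorder_Inf_le1)
      then show False using gt d N(2) by simp
    qed
    then show "g \<noteq> \<one> \<and> g \<in> Lambda G k" using False unfolding Lambda_def by blast
  next
    assume "g \<noteq> \<one> \<and> g \<in> Lambda G k"
    then have inL: "g \<in> N" if "fin_index_normal G N" "card (rcosets N) \<le> k" for N
      using that unfolding Lambda_def by blast
    have "Inf Sg \<in> Sg" using Inf_nat_def1[OF Sne] .
    then obtain N where N: "fin_index_normal G N" "g \<notin> N" "Inf Sg = card (rcosets N)"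
      unfolding Sg_def by blast
    show "k < depth G g"
    proof (rule ccontr)
      assume "\<not> k < depth G g"
      then have "card (rcosets N) \<le> k" using d N(3) by simp
      then show False using inL[OF N(1)] N(2) by blast
    qed
  qed
qed

lemma depth_gt01:
  assumes rf: "residually_finite G" and g: "g \<in> carrier G" and k: "k \<le> 1"
  shows "(depth G g > k) = (g \<noteq> \<one>)"
proof -
  have "g \<in> Lambda G 1" unfolding Lambda_def using index_one g by blast
  then have "(depth G g > 1) = (g \<noteq> \<one>)" using depth_gt[OF rf g, of 1] by simp
  moreover have "depth G g = 0" if "g = \<one>" using that unfolding depth_def by simp
  ultimately show ?thesis using k by (cases k) auto
qed

lemma exp_formula:
  assumes rf: "residually_finite G"
  shows "measure_pmf.expectation (lazy_walk G S n) (\<lambda>x. real (depth G x))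
    = 2 * nu n (carrier G - {\<one>}) + suminf (\<lambda>k. nu n (Lambda G (k + 2) - {\<one>}))"
proof -
  let ?p = "lazy_walk G S n"
  let ?A = "set_pmf ?p"
  have A: "finite ?A" "?A \<subseteq> carrier G" using support by auto
  define B where "B = (\<Sum>a\<in>?A. depth G a)"
  have dB: "depth G a \<le> B" if "a \<in> ?A" for a unfolding B_def using that A(1) by (intro member_le_sum) auto
  define N where "N = B + 2"
  have dN: "depth G a \<le> N" if "a \<in> ?A" for a using dB[OF that] unfolding N_def by simp
  define q where "q k = nu n {x. depth G x > k}" for k
  have q0: "q k = 0" if "k \<ge> B" for k
  proof -
    have "q k = (\<Sum>a\<in>?A. indicator {x. depth G x > k} a * pmf ?p a)"
      unfolding q_def by (rule prob_as_sum[OF A(1) order_refl])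
    also have "\<dots> = 0" using dB that by (intro sum.neutral) (force simp: indicator_def)
    finally show ?thesis .
  qed
  have "measure_pmf.expectation ?p (\<lambda>x. real (depth G x)) = (\<Sum>a\<in>?A. real (depth G a) * pmf ?p a)"
    by (rule exp_as_sum[OF A(1) order_refl])
  also have "\<dots> = (\<Sum>a\<in>?A. (\<Sum>k<N. indicator {x. depth G x > k} a) * pmf ?p a)"
  proof (intro sum.cong refl)
    fix a assume a: "a \<in> ?A"
    have "(\<Sum>k<N. indicator {x. depth G x > k} a :: real) = (\<Sum>k<depth G a. 1)"
      by (rule sum.mono_neutral_cong_right) (use dN[OF a] in \<open>auto simp: indicator_def\<close>)
    then show "real (depth G a) * pmf ?p a = (\<Sum>k<N. indicator {x. depth G x > k} a) * pmf ?p a" by simp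
  qed
  also have "\<dots> = (\<Sum>k<N. \<Sum>a\<in>?A. indicator {x. depth G x > k} a * pmf ?p a)"
    unfolding sum_distrib_right by (rule sum.swap)
  also have "\<dots> = (\<Sum>k<N. q k)"
    unfolding q_def by (intro sum.cong refl prob_as_sum[OF A(1) order_refl, symmetric])
  also have "\<dots> = q 0 + q 1 + (\<Sum>k<B. q (k + 2))"
  proof -
    have Ns: "N = Suc (Suc B)" unfolding N_def by simp
    show ?thesis unfolding Ns sum.lessThan_Suc_shift by (simp add: numeral_2_eq_2 add.assoc del: sum.lessThan_Suc)
  qed
  also have "(\<Sum>k<B. q (k + 2)) = suminf (\<lambda>k. q (k + 2))"
    by (rule suminf_finite[symmetric]) (auto intro: q0)
  finally have E: "measure_pmf.expectation ?p (\<lambda>x. real (depth G x)) = q 0 + q 1 + suminf (\<lambda>k. q (k + 2))" .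
  have q01: "q 0 = nu n (carrier G - {\<one>})" "q 1 = nu n (carrier G - {\<one>})"
    unfolding q_def using depth_gt01[OF rf] by (auto intro!: prob_cong)
  have q2: "(\<lambda>k. q (k + 2)) = (\<lambda>k. nu n (Lambda G (k + 2) - {\<one>}))"
    unfolding q_def using depth_gt[OF rf] by (auto intro!: prob_cong ext)
  show ?thesis using E q01 q2 by simp
qed

lemma rcosets_one_infinite:
  assumes "infinite (carrier G)"
  shows "infinite (rcosets {\<one>})"
proof
  assume fin: "finite (rcosets {\<one>})"
  have "(\<lambda>x. {x}) ` carrier G \<subseteq> rcosets {\<one>}"
  proof
    fix C assume "C \<in> (\<lambda>x. {x}) ` carrier G"
    then obtain x where x: "x \<in> carrier G" "C = {x}" by blast
    have "{\<one>} #> x = {x}" using x unfolding r_coset_def by simp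
    then show "C \<in> rcosets {\<one>}" using x rcosetsI[of "{\<one>}" x] by simp
  qed
  then have "finite ((\<lambda>x. {x}) ` carrier G)" using fin by (rule finite_subset)
  then have "finite (carrier G)" by (rule finite_imageD) (simp add: inj_on_def)
  then show False using assms by simp
qed

lemma one_lim:
  assumes rf: "residually_finite G" and inf: "infinite (carrier G)"
  shows "(\<lambda>n. nu n {\<one>}) \<longlonglongrightarrow> 0"
proof -
  define F where "F = {N. fin_index_normal G N}"
  have F1: "\<And>N. N \<in> F \<Longrightarrow> fin_index_normal G N" "carrier G \<in> F" unfolding F_def using carrier_fin by auto
  have one_in: "\<one> \<in> N" if "fin_index_normal G N" for N
    using that unfolding fin_index_normal_def using normal_imp_subgroup subgroup.one_closed by blast
  have "\<Inter>F = {\<one>}"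
  proof (intro equalityI subsetI)
    fix x assume x: "x \<in> \<Inter>F"
    then have xc: "x \<in> carrier G" using F1(2) by blast
    show "x \<in> {\<one>}"
    proof (rule ccontr)
      assume "x \<notin> {\<one>}"
      then obtain N where "fin_index_normal G N" "x \<notin> N" using rf xc unfolding residually_finite_def by auto
      then show False using x unfolding F_def by blast
    qed
  qed (use one_in F_def in auto)
  then show ?thesis using lemmaL[OF F1] rcosets_one_infinite[OF inf] by simp
qed

lemma Lambda_lim:
  assumes "k \<ge> 1"
  shows "(\<lambda>n. nu n (Lambda G k)) \<longlonglongrightarrow> 1 / real (card (rcosets (Lambda G k)))"
proof -
  define F where "F = {N. fin_index_normal G N \<and> card (rcosets N) \<le> k}"
  have F1: "\<And>N. N \<in> F \<Longrightarrow> fin_index_normal G N" "carrier G \<in> F"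
    unfolding F_def using carrier_fin rcosets_carrier_eq assms by auto
  show ?thesis using lemmaL[OF F1] unfolding Lambda_def F_def by simp
qed

lemma one_in_Lambda: "\<one> \<in> Lambda G k"
  unfolding Lambda_def fin_index_normal_def using normal_imp_subgroup subgroup.one_closed by blast

end

theorem proposition4p3:
  fixes G :: "('a, 'b) monoid_scheme" and S :: "'a set" and p :: "nat \<Rightarrow> real"
  assumes "group G"
    and "infinite (carrier G)"
    and "residually_finite G"
    and "finite S" and "S \<subseteq> carrier G"
    and "\<And>s. s \<in> S \<Longrightarrow> inv\<^bsub>G\<^esub> s \<in> S"
    and "generate G S = carrier G"
    and "\<And>k. k \<ge> 2 \<Longrightarrow> p k > 0"
    and "summable (\<lambda>k. p (k + 2))"
    and "\<And>n k. n \<ge> 1 \<Longrightarrow> k \<ge> 2 \<Longrightarrow>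
           measure_pmf.prob (lazy_walk G S n) (Lambda G k - {\<one>\<^bsub>G\<^esub>}) \<le> p k"
  shows "summable (\<lambda>k. 1 / real (card (rcosets\<^bsub>G\<^esub> (Lambda G (k + 2)))))
    \<and> (\<lambda>n. measure_pmf.expectation (lazy_walk G S n) (\<lambda>x. real (depth G x)))
        \<longlonglongrightarrow> 2 + suminf (\<lambda>k. 1 / real (card (rcosets\<^bsub>G\<^esub> (Lambda G (k + 2)))))"
proof -
  interpret group G by fact
  have Sne: "S \<noteq> {}"
  proof
    assume "S = {}"
    then have "generate G S = {\<one>\<^bsub>G\<^esub>}" using generate_empty by simp
    then have "carrier G = {\<one>\<^bsub>G\<^esub>}" using assms(7) by simp
    then show False using assms(2) by simp
  qed
  interpret W: walk_setup G S
    by unfold_locales (use assms Sne in auto)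
  define a where "a k n = W.nu n (Lambda G (k + 2) - {\<one>\<^bsub>G\<^esub>})" for k n
  define b where "b k = 1 / real (card (rcosets\<^bsub>G\<^esub> (Lambda G (k + 2))))" for k
  have one0: "(\<lambda>n. W.nu n {\<one>\<^bsub>G\<^esub>}) \<longlonglongrightarrow> 0" using W.one_lim[OF assms(3,2)] .
  have alim: "(\<lambda>n. a k n) \<longlonglongrightarrow> b k" for k
  proof -
    have eq: "a k n = W.nu n (Lambda G (k + 2)) - W.nu n {\<one>\<^bsub>G\<^esub>}" for n
      unfolding a_def using W.one_in_Lambda by (subst measure_pmf.finite_measure_Diff) auto
    have "(\<lambda>n. W.nu n (Lambda G (k + 2)) - W.nu n {\<one>\<^bsub>G\<^esub>}) \<longlonglongrightarrow> b k - 0"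
      unfolding b_def by (rule tendsto_diff[OF W.Lambda_lim one0]) simp
    then show ?thesis unfolding eq by simp
  qed
  have bnd: "norm (a k n) \<le> p (k + 2)" if "n \<ge> 1" for k n
    using assms(10)[OF that, of "k + 2"] unfolding a_def by simp
  have bound: "\<forall>\<^sub>F (k, n) in sequentially \<times>\<^sub>F sequentially. norm (a k n) \<le> p (k + 2)"
    unfolding eventually_prod_sequentially using bnd by (intro exI[of _ 1]) auto
  have T: "summable (\<lambda>k. norm (b k)) \<and> (\<lambda>n. suminf (\<lambda>k. a k n)) \<longlonglongrightarrow> suminf b"
    using tannerys_theorem[OF alim bound assms(9)] by simp
  have sb: "summable b" using T summable_norm_cancel by blast
  have cdiff: "W.nu n (carrier G - {\<one>\<^bsub>G\<^esub>}) = 1 - W.nu n {\<one>\<^bsub>G\<^esub>}" for n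
    using W.prob_carrier by (subst measure_pmf.finite_measure_Diff) auto
  have "(\<lambda>n. 2 * (1 - W.nu n {\<one>\<^bsub>G\<^esub>}) + suminf (\<lambda>k. a k n)) \<longlonglongrightarrow> 2 * (1 - 0) + suminf b"
  proof -
    have l1: "(\<lambda>n. 1 - W.nu n {\<one>\<^bsub>G\<^esub>}) \<longlonglongrightarrow> 1 - 0" by (rule tendsto_diff[OF tendsto_const one0])
    have l2: "(\<lambda>n. 2 * (1 - W.nu n {\<one>\<^bsub>G\<^esub>})) \<longlonglongrightarrow> 2 * (1 - 0)" by (rule tendsto_mult[OF tendsto_const l1])
    show ?thesis by (rule tendsto_add[OF l2 conjunct2[OF T]])
  qed
  moreover have "measure_pmf.expectation (lazy_walk G S n) (\<lambda>x. real (depth G x))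
      = 2 * (1 - W.nu n {\<one>\<^bsub>G\<^esub>}) + suminf (\<lambda>k. a k n)" for n
    using W.exp_formula[OF assms(3), of n] cdiff unfolding a_def by simp
  ultimately show ?thesis using sb unfolding b_def by simp
qed

end
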